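(* Let $g_1,g_2$ be holomorphic functions on a domain $\mathcal{D}\subset\mathbb{C}$ with $g_1'g_2'\neq 0$ on $\mathcal{D}$, let $\sqrt{g_1'g_2'}$ be a holomorphic branch of the square root on $\mathcal{D}$, and define $\Phi=(\phi_1,\phi_2,\phi_3,\phi_4):\mathcal{D}\to\mathbb{C}^4$ by $$\phi_1=\frac{\mathrm{i}}{2}\frac{g_1g_2+1}{\sqrt{g_1'g_2'}},\quad \phi_2=\frac12\frac{g_1g_2-1}{\sqrt{g_1'g_2'}},\quad \phi_3=\frac12\frac{g_1+g_2}{\sqrt{g_1'g_2'}},\quad \phi_4=\frac{\mathrm{i}}{2}\frac{g_1-g_2}{\sqrt{g_1'g_2'}}.$$ Let $\Psi$ be a holomorphic function on $\mathcal{D}$ with $\Psi'=\Phi$ and set $\mathrm{x}(u,v)=\operatorname{Re}\Psi(u+\mathrm{i}v)$. Then $\mathrm{x}$ defines a minimal surface of general type in $\mathbb{R}^4$, and $(u,v)$ are canonical coordinates of the first type on it.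
   Context: A minimal surface in $\mathbb{R}^4$ is a regular surface with zero mean curvature vector. With $E=\mathrm{x}_u^2$, $X_1=\mathrm{x}_u/\|\mathrm{x}_u\|$, $X_2=\mathrm{x}_v/\|\mathrm{x}_v\|$ and second fundamental form $\sigma$: a point is superconformal if $\sigma(X_1,X_1)\perp\sigma(X_1,X_2)$ and $\|\sigma(X_1,X_1)\|=\|\sigma(X_1,X_2)\|$ there; a minimal surface is of general type if it has no superconformal points. Isothermal coordinates $(u,v)$ ($E=G$, $F=0$) are canonical of the first type if $\sigma(X_1,X_1)\perp\sigma(X_1,X_2)$ and $E^2(\|\sigma(X_1,X_1)\|^2-\|\sigma(X_1,X_2)\|^2)=1$. *)

theory Defs
  imports "HOL-Analysis.Analysis"
begin

text \<open>A parametrized surface is a map x from (an open subset of) the complex plane,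
  identified with R^2 via u + i v, to R^4 (type real^4).\<close>

definition pdu :: "(complex \<Rightarrow> 'a::real_normed_vector) \<Rightarrow> complex \<Rightarrow> 'a" where
  "pdu f p = frechet_derivative f (at p) 1"

definition pdv :: "(complex \<Rightarrow> 'a::real_normed_vector) \<Rightarrow> complex \<Rightarrow> 'a" where
  "pdv f p = frechet_derivative f (at p) \<i>"

definition fE :: "(complex \<Rightarrow> real^4) \<Rightarrow> complex \<Rightarrow> real" where
  "fE x p = pdu x p \<bullet> pdu x p"
definition fF :: "(complex \<Rightarrow> real^4) \<Rightarrow> complex \<Rightarrow> real" where
  "fF x p = pdu x p \<bullet> pdv x p"
definition fG :: "(complex \<Rightarrow> real^4) \<Rightarrow> complex \<Rightarrow> real" where
  "fG x p = pdv x p \<bullet> pdv x p"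

text \<open>Normal component of a vector w at p: w minus its orthogonal projection onto the
  tangent plane span{x_u, x_v} (explicit Gram formula).\<close>
definition normal_part :: "(complex \<Rightarrow> real^4) \<Rightarrow> complex \<Rightarrow> real^4 \<Rightarrow> real^4" where
  "normal_part x p w =
     (let E = fE x p; F = fF x p; G = fG x p; a = w \<bullet> pdu x p; b = w \<bullet> pdv x p;
          D = E * G - F^2
      in w - (((G * a - F * b) / D) *\<^sub>R pdu x p + ((E * b - F * a) / D) *\<^sub>R pdv x p))"

definition sff11 :: "(complex \<Rightarrow> real^4) \<Rightarrow> complex \<Rightarrow> real^4" where
  "sff11 x p = normal_part x p (pdu (pdu x) p)"
definition sff12 :: "(complex \<Rightarrow> real^4) \<Rightarrow> complex \<Rightarrow> real^4" where
  "sff12 x p = normal_part x p (pdv (pdu x) p)"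
definition sff22 :: "(complex \<Rightarrow> real^4) \<Rightarrow> complex \<Rightarrow> real^4" where
  "sff22 x p = normal_part x p (pdv (pdv x) p)"

text \<open>sigma(X1,X1) and sigma(X1,X2) with X1 = x_u/|x_u|, X2 = x_v/|x_v| (bilinearity).\<close>
definition sigma11 :: "(complex \<Rightarrow> real^4) \<Rightarrow> complex \<Rightarrow> real^4" where
  "sigma11 x p = (1 / fE x p) *\<^sub>R sff11 x p"
definition sigma12 :: "(complex \<Rightarrow> real^4) \<Rightarrow> complex \<Rightarrow> real^4" where
  "sigma12 x p = (1 / (norm (pdu x p) * norm (pdv x p))) *\<^sub>R sff12 x p"

text \<open>Mean curvature vector H = (1/2) trace_g sigma.\<close>
definition mean_curv_vec :: "(complex \<Rightarrow> real^4) \<Rightarrow> complex \<Rightarrow> real^4" where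
  "mean_curv_vec x p =
     (1 / (2 * (fE x p * fG x p - (fF x p)^2))) *\<^sub>R
       (fG x p *\<^sub>R sff11 x p - (2 * fF x p) *\<^sub>R sff12 x p + fE x p *\<^sub>R sff22 x p)"

definition regular_surface :: "complex set \<Rightarrow> (complex \<Rightarrow> real^4) \<Rightarrow> bool" where
  "regular_surface D x \<longleftrightarrow> open D \<and> D \<noteq> {} \<and>
     (\<forall>p\<in>D. x differentiable at p \<and> pdu x differentiable at p \<and> pdv x differentiable at p) \<and>
     continuous_on D (pdu (pdu x)) \<and> continuous_on D (pdv (pdu x)) \<and>
     continuous_on D (pdu (pdv x)) \<and> continuous_on D (pdv (pdv x)) \<and>
     (\<forall>p\<in>D. \<forall>a b::real. a *\<^sub>R pdu x p + b *\<^sub>R pdv x p = 0 \<longrightarrow> a = 0 \<and> b = 0)"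

definition minimal_surface :: "complex set \<Rightarrow> (complex \<Rightarrow> real^4) \<Rightarrow> bool" where
  "minimal_surface D x \<longleftrightarrow> regular_surface D x \<and> (\<forall>p\<in>D. mean_curv_vec x p = 0)"

definition superconformal_point :: "(complex \<Rightarrow> real^4) \<Rightarrow> complex \<Rightarrow> bool" where
  "superconformal_point x p \<longleftrightarrow>
     sigma11 x p \<bullet> sigma12 x p = 0 \<and> norm (sigma11 x p) = norm (sigma12 x p)"

definition minimal_general_type :: "complex set \<Rightarrow> (complex \<Rightarrow> real^4) \<Rightarrow> bool" where
  "minimal_general_type D x \<longleftrightarrow> minimal_surface D x \<and> (\<forall>p\<in>D. \<not> superconformal_point x p)"

definition canonical_first_type :: "complex set \<Rightarrow> (complex \<Rightarrow> real^4) \<Rightarrow> bool" where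
  "canonical_first_type D x \<longleftrightarrow> (\<forall>p\<in>D.
     fE x p = fG x p \<and> fF x p = 0 \<and> sigma11 x p \<bullet> sigma12 x p = 0 \<and>
     (fE x p)^2 * ((norm (sigma11 x p))^2 - (norm (sigma12 x p))^2) = 1)"

end

theory Submission
  imports Defs "HOL-Complex_Analysis.Cauchy_Integral_Formula"
begin

definition vv :: "real \<Rightarrow> real \<Rightarrow> real \<Rightarrow> real \<Rightarrow> real^4" where
 "vv a b c d = vector [a,b,c,d]"
lemma vv_nth[simp]: "vv a b c d $ 1 = a" "vv a b c d $ 2 = b" "vv a b c d $ 3 = c" "vv a b c d $ 4 = d"
  by (simp_all add: vv_def vector_def)
lemma vv_inner[simp]: "vv a b c d \<bullet> vv a' b' c' d' = a*a' + b*b' + c*c' + d*d'"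
  by (simp add: inner_vec_def sum_4)
lemma vv_eq_iff: "vv a b c d = vv a' b' c' d' \<longleftrightarrow> a=a' \<and> b=b' \<and> c=c' \<and> d=d'"
  by (metis vv_nth)
lemma vv_ops[simp]: "vv a b c d + vv a' b' c' d' = vv (a+a') (b+b') (c+c') (d+d')"
  "vv a b c d - vv a' b' c' d' = vv (a-a') (b-b') (c-c') (d-d')"
  "r *\<^sub>R vv a b c d = vv (r*a) (r*b) (r*c) (r*d)"
  "- vv a b c d = vv (-a) (-b) (-c) (-d)"
  by (simp_all add: vec_eq_iff forall_4)
lemma vv_zero[simp]: "vv a b c d = 0 \<longleftrightarrow> a=0 \<and> b=0 \<and> c=0 \<and> d=0"
  by (auto simp add: vec_eq_iff forall_4)
lemma vv_split: "vv a b c d = a *\<^sub>R vv 1 0 0 0 + b *\<^sub>R vv 0 1 0 0 + c *\<^sub>R vv 0 0 1 0 + d *\<^sub>R vv 0 0 0 1"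
  by simp
lemma Re_deriv: "(f has_field_derivative c) (at p) \<Longrightarrow> ((\<lambda>z. Re (f z)) has_derivative (\<lambda>h. Re (c*h))) (at p)"
  unfolding has_field_derivative_def
  using bounded_linear.has_derivative[OF bounded_linear_Re] by blast
lemma vv_deriv:
  assumes "(f1 has_field_derivative c1) (at p)" "(f2 has_field_derivative c2) (at p)"
    "(f3 has_field_derivative c3) (at p)" "(f4 has_field_derivative c4) (at p)"
  shows "((\<lambda>z. vv (Re (f1 z)) (Re (f2 z)) (Re (f3 z)) (Re (f4 z))) has_derivative
     (\<lambda>h. vv (Re (c1*h)) (Re (c2*h)) (Re (c3*h)) (Re (c4*h)))) (at p)"
  using assms[unfolded has_field_derivative_def] apply (subst (1 2) vv_split)
  apply (intro derivative_intros Re_deriv) apply (auto simp: has_field_derivative_def)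
  done

lemma proj_alg:
  fixes a b A B :: "'a::real_inner"
  assumes "a\<bullet>a = E" "b\<bullet>b = E" "a\<bullet>b = 0" "E > 0" "A\<bullet>a = B\<bullet>b" "A\<bullet>b = -(B\<bullet>a)"
    "A\<bullet>A - B\<bullet>B = 1" "A\<bullet>B = 0"
  defines "N \<equiv> \<lambda>w. w - ((w\<bullet>a)/E) *\<^sub>R a - ((w\<bullet>b)/E) *\<^sub>R b"
  shows "N A \<bullet> N B = 0" "N A \<bullet> N A - N B \<bullet> N B = 1"
proof -
  have ba: "b\<bullet>a = 0" using assms(3) by (simp add: inner_commute)
  have BA: "B\<bullet>A = 0" using assms(8) by (simp add: inner_commute)
  show "N A \<bullet> N B = 0"
    unfolding N_def using assms(1-6,8) ba
    apply (simp only: inner_diff_left inner_diff_right inner_scaleR_left inner_scaleR_right)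
    apply (simp add: inner_commute[of b a] inner_commute[of a A] inner_commute[of b A] inner_commute[of a B] inner_commute[of b B] inner_commute[of B A])
    done
  show "N A \<bullet> N A - N B \<bullet> N B = 1"
    unfolding N_def using assms(1-7) ba
    apply (simp only: inner_diff_left inner_diff_right inner_scaleR_left inner_scaleR_right)
    apply (simp add: inner_commute[of b a] inner_commute[of a A] inner_commute[of b A] inner_commute[of a B] inner_commute[of b B] inner_commute[of B A])
    done
qed

lemma main_alg:
  fixes x :: "complex \<Rightarrow> real^4"
  assumes pa: "pdu x p = vv (Re f1) (Re f2) (Re f3) (Re f4)"
    and pb: "pdv x p = vv (Re (f1*\<i>)) (Re (f2*\<i>)) (Re (f3*\<i>)) (Re (f4*\<i>))"
    and pA: "pdu (pdu x) p = vv (Re (h1*1)) (Re (h2*1)) (Re (h3*1)) (Re (h4*1))"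
    and pB: "pdv (pdu x) p = vv (Re (h1*\<i>)) (Re (h2*\<i>)) (Re (h3*\<i>)) (Re (h4*\<i>))"
    and pC: "pdv (pdv x) p = vv (Re (h1*\<i>*\<i>)) (Re (h2*\<i>*\<i>)) (Re (h3*\<i>*\<i>)) (Re (h4*\<i>*\<i>))"
    and e1: "f1^2+f2^2+f3^2+f4^2 = 0"
    and e2: "f1*h1+f2*h2+f3*h3+f4*h4 = 0"
    and e3: "h1^2+h2^2+h3^2+h4^2 = 1"
    and nz: "\<not> (f1 = 0 \<and> f2 = 0 \<and> f3 = 0 \<and> f4 = 0)"
  shows "fE x p = fG x p \<and> fF x p = 0 \<and> sigma11 x p \<bullet> sigma12 x p = 0 \<and>
     (fE x p)^2 * ((norm (sigma11 x p))^2 - (norm (sigma12 x p))^2) = 1 \<and>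
     mean_curv_vec x p = 0 \<and> \<not> superconformal_point x p \<and>
     (\<forall>a b::real. a *\<^sub>R pdu x p + b *\<^sub>R pdv x p = 0 \<longrightarrow> a = 0 \<and> b = 0)"
proof -
  define a where "a = pdu x p"
  define b where "b = pdv x p"
  define A where "A = pdu (pdu x) p"
  define B where "B = pdv (pdu x) p"
  define E where "E = a \<bullet> a"
  have r1: "Re (f1^2+f2^2+f3^2+f4^2) = 0" "Im (f1^2+f2^2+f3^2+f4^2) = 0" using e1 by simp_all
  have r2: "Re (f1*h1+f2*h2+f3*h3+f4*h4) = 0" "Im (f1*h1+f2*h2+f3*h3+f4*h4) = 0" using e2 by simp_all
  have r3: "Re (h1^2+h2^2+h3^2+h4^2) = 1" "Im (h1^2+h2^2+h3^2+h4^2) = 0" using e3 by simp_all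
  note rr = r1 r2 r3
  have C: "pdv (pdv x) p = - A" unfolding A_def pA pC by simp
  have bb: "b\<bullet>b = E" using rr(1) unfolding E_def a_def b_def pa pb
    by (simp add: power2_eq_square algebra_simps;linarith?)
  have ab: "a\<bullet>b = 0" using rr(2) unfolding E_def a_def b_def pa pb
    by (simp add: power2_eq_square algebra_simps;linarith?)
  have Aa: "A\<bullet>a = B\<bullet>b" using rr(3) unfolding A_def B_def a_def b_def pa pb pA pB
    by (simp add: algebra_simps;linarith?)
  have Ab: "A\<bullet>b = -(B\<bullet>a)" using rr(4) unfolding A_def B_def a_def b_def pa pb pA pB
    by (simp add: algebra_simps;linarith?)
  have AA: "A\<bullet>A - B\<bullet>B = 1" using rr(5) unfolding A_def B_def pA pB
    by (simp add: power2_eq_square algebra_simps;linarith?)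
  have AB: "A\<bullet>B = 0" using rr(6) unfolding A_def B_def pA pB
    by (simp add: power2_eq_square algebra_simps;linarith?)
  have Epos: "E > 0"
  proof (rule ccontr)
    assume "\<not> E > 0"
    then have "E = 0" unfolding E_def by (simp add: order_le_less)
    then have "a = 0" "b = 0" using bb unfolding E_def by simp_all
    then show False using nz unfolding a_def b_def pa pb by (simp add: complex_eq_iff)
  qed
  define N where "N \<equiv> \<lambda>w. w - ((w\<bullet>a)/E) *\<^sub>R a - ((w\<bullet>b)/E) *\<^sub>R b"
  have P: "N A \<bullet> N B = 0" "N A \<bullet> N A - N B \<bullet> N B = 1"
    using proj_alg[OF E_def[symmetric] bb ab Epos Aa Ab AA AB] unfolding N_def by auto
  have fE: "fE x p = E" "fG x p = E" "fF x p = 0"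
    using bb ab unfolding fE_def fG_def fF_def E_def a_def b_def by auto
  have np: "normal_part x p w = N w" for w
    unfolding normal_part_def fE N_def Let_def a_def[symmetric] b_def[symmetric] using Epos
    by (simp add: power2_eq_square algebra_simps)
  have nA: "norm a = sqrt E" "norm b = sqrt E" using bb unfolding E_def by (simp_all add: norm_eq_sqrt_inner)
  have s11: "sigma11 x p = (1/E) *\<^sub>R N A" unfolding sigma11_def sff11_def fE np A_def ..
  have s12: "sigma12 x p = (1/E) *\<^sub>R N B" unfolding sigma12_def sff12_def np B_def a_def[symmetric] b_def[symmetric] nA
    using Epos by simp
  have m1: "sigma11 x p \<bullet> sigma12 x p = 0" unfolding s11 s12 using P by simp
  have m2: "(fE x p)^2 * ((norm (sigma11 x p))^2 - (norm (sigma12 x p))^2) = 1"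
    unfolding s11 s12 fE power2_norm_eq_inner using P Epos
    by (simp add: power2_eq_square field_simps)
  have mc: "mean_curv_vec x p = 0"
  proof -
    have "N (-A) = - N A" unfolding N_def by (simp add: algebra_simps)
    then show ?thesis unfolding mean_curv_vec_def fE sff11_def sff22_def C np A_def[symmetric] by simp
  qed
  have nsc: "\<not> superconformal_point x p"
  proof
    assume "superconformal_point x p"
    then have "norm (sigma11 x p) = norm (sigma12 x p)" unfolding superconformal_point_def by simp
    with m2 show False by simp
  qed
  have ind: "\<forall>\<alpha> \<beta>::real. \<alpha> *\<^sub>R pdu x p + \<beta> *\<^sub>R pdv x p = 0 \<longrightarrow> \<alpha> = 0 \<and> \<beta> = 0"
  proof (intro allI impI)
    fix \<alpha> \<beta> :: real assume h: "\<alpha> *\<^sub>R pdu x p + \<beta> *\<^sub>R pdv x p = 0"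
    have "(\<alpha> *\<^sub>R a + \<beta> *\<^sub>R b) \<bullet> a = 0" "(\<alpha> *\<^sub>R a + \<beta> *\<^sub>R b) \<bullet> b = 0"
      using h unfolding a_def b_def by simp_all
    then have "\<alpha> * E = 0" "\<beta> * E = 0" using bb ab unfolding E_def
      by (simp_all add: inner_add_left inner_commute[of b a])
    then show "\<alpha> = 0 \<and> \<beta> = 0" using Epos by simp
  qed
  show ?thesis using fE m1 m2 mc nsc ind by simp
qed

lemma phi_alg:
  fixes P Q d1 d2 S dS :: complex
  assumes S: "S \<noteq> 0" and SS: "S^2 = d1*d2"
  defines "w1 \<equiv> \<i>/2*(P*Q+1)" and "w2 \<equiv> 1/2*(P*Q-1)" and "w3 \<equiv> 1/2*(P+Q)" and "w4 \<equiv> \<i>/2*(P-Q)"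
    and "u1 \<equiv> \<i>/2*(d1*Q+P*d2)" and "u2 \<equiv> 1/2*(d1*Q+P*d2)" and "u3 \<equiv> 1/2*(d1+d2)" and "u4 \<equiv> \<i>/2*(d1-d2)"
  shows "(w1/S)^2+(w2/S)^2+(w3/S)^2+(w4/S)^2 = 0"
    "(w1/S)*((u1*S-w1*dS)/(S*S)) + (w2/S)*((u2*S-w2*dS)/(S*S)) + (w3/S)*((u3*S-w3*dS)/(S*S)) + (w4/S)*((u4*S-w4*dS)/(S*S)) = 0"
    "((u1*S-w1*dS)/(S*S))^2 + ((u2*S-w2*dS)/(S*S))^2 + ((u3*S-w3*dS)/(S*S))^2 + ((u4*S-w4*dS)/(S*S))^2 = 1"
    "\<not> (w1/S = 0 \<and> w2/S = 0 \<and> w3/S = 0 \<and> w4/S = 0)"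
proof -
  have a: "w1^2+w2^2+w3^2+w4^2 = 0" unfolding w1_def w2_def w3_def w4_def
    by (simp add: power2_eq_square field_simps)
  have b: "w1*u1+w2*u2+w3*u3+w4*u4 = 0" unfolding w1_def w2_def w3_def w4_def u1_def u2_def u3_def u4_def
    by (simp add: power2_eq_square field_simps)
  have c: "u1^2+u2^2+u3^2+u4^2 = d1*d2" unfolding u1_def u2_def u3_def u4_def
    by (simp add: power2_eq_square field_simps)
  show "(w1/S)^2+(w2/S)^2+(w3/S)^2+(w4/S)^2 = 0" using a S
    by (simp add: power_divide add_divide_distrib[symmetric])
  define t where "t = 1/S"
  have tS: "t*S = 1" using S unfolding t_def by simp
  have T: "(u*S - w*dS)/(S*S) = u*t - w*dS*t^2" for u w
    using S unfolding t_def by (simp add: field_simps power2_eq_square)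
  have W: "w/S = w*t" for w unfolding t_def by simp
  have "(w1*t)*(u1*t - w1*dS*t^2) + (w2*t)*(u2*t - w2*dS*t^2) + (w3*t)*(u3*t - w3*dS*t^2) + (w4*t)*(u4*t - w4*dS*t^2)
     = t^2*(w1*u1+w2*u2+w3*u3+w4*u4) - dS*t^3*(w1^2+w2^2+w3^2+w4^2)"
    by (simp add: power2_eq_square power3_eq_cube algebra_simps)
  then show "(w1/S)*((u1*S-w1*dS)/(S*S)) + (w2/S)*((u2*S-w2*dS)/(S*S)) + (w3/S)*((u3*S-w3*dS)/(S*S)) + (w4/S)*((u4*S-w4*dS)/(S*S)) = 0"
    unfolding T W using a b by simp
  have "(u1*t - w1*dS*t^2)^2 + (u2*t - w2*dS*t^2)^2 + (u3*t - w3*dS*t^2)^2 + (u4*t - w4*dS*t^2)^2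
     = t^2*(u1^2+u2^2+u3^2+u4^2) - 2*dS*t^3*(w1*u1+w2*u2+w3*u3+w4*u4) + dS^2*t^4*(w1^2+w2^2+w3^2+w4^2)"
    by (simp add: power2_eq_square power3_eq_cube power4_eq_xxxx algebra_simps)
  also have "\<dots> = (t*S)^2" using a b c SS by (simp add: power_mult_distrib)
  finally show "((u1*S-w1*dS)/(S*S))^2 + ((u2*S-w2*dS)/(S*S))^2 + ((u3*S-w3*dS)/(S*S))^2 + ((u4*S-w4*dS)/(S*S))^2 = 1"
    unfolding T using tS by simp
  show "\<not> (w1/S = 0 \<and> w2/S = 0 \<and> w3/S = 0 \<and> w4/S = 0)"
  proof
    assume "w1/S = 0 \<and> w2/S = 0 \<and> w3/S = 0 \<and> w4/S = 0"
    then have "w1 = 0" "w2 = 0" using S by auto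
    then have "\<i>*w2 - w1 = 0" by simp
    moreover have "\<i>*w2 - w1 = -\<i>" unfolding w1_def w2_def by (simp add: field_simps)
    ultimately show False by simp
  qed
qed


lemma vv_cont:
  assumes "continuous_on D f1" "continuous_on D f2" "continuous_on D f3" "continuous_on D f4"
  shows "continuous_on D (\<lambda>z. vv (Re (f1 z)) (Re (f2 z)) (Re (f3 z)) (Re (f4 z)))"
  apply (subst vv_split)
  apply (intro continuous_intros assms)
  done

theorem mainTheorem4:
  fixes D :: "complex set" and g1 g2 s \<Psi>1 \<Psi>2 \<Psi>3 \<Psi>4 :: "complex \<Rightarrow> complex"
  assumes "open D" and "connected D" and "D \<noteq> {}"
    and "g1 holomorphic_on D" and "g2 holomorphic_on D"
    and "\<And>z. z \<in> D \<Longrightarrow> deriv g1 z * deriv g2 z \<noteq> 0"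
    and "s holomorphic_on D" and "\<And>z. z \<in> D \<Longrightarrow> (s z)^2 = deriv g1 z * deriv g2 z"
    and "\<Psi>1 holomorphic_on D" and "\<Psi>2 holomorphic_on D"
    and "\<Psi>3 holomorphic_on D" and "\<Psi>4 holomorphic_on D"
    and "\<And>z. z \<in> D \<Longrightarrow> deriv \<Psi>1 z = (\<i> / 2) * (g1 z * g2 z + 1) / s z"
    and "\<And>z. z \<in> D \<Longrightarrow> deriv \<Psi>2 z = (1 / 2) * (g1 z * g2 z - 1) / s z"
    and "\<And>z. z \<in> D \<Longrightarrow> deriv \<Psi>3 z = (1 / 2) * (g1 z + g2 z) / s z"
    and "\<And>z. z \<in> D \<Longrightarrow> deriv \<Psi>4 z = (\<i> / 2) * (g1 z - g2 z) / s z"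
  defines "x \<equiv> (\<lambda>z. vector [Re (\<Psi>1 z), Re (\<Psi>2 z), Re (\<Psi>3 z), Re (\<Psi>4 z)] :: real^4)"
  shows "minimal_general_type D x \<and> canonical_first_type D x"
proof -
  note oD = assms(1)
  define dg1 where "dg1 = deriv g1"
  define dg2 where "dg2 = deriv g2"
  define ds where "ds = deriv s"
  have sz: "s z \<noteq> 0" if "z \<in> D" for z
    using assms(6)[OF that] assms(8)[OF that] by (metis power_zero_numeral)
  have hg1: "(g1 has_field_derivative dg1 z) (at z)" if "z \<in> D" for z
    unfolding dg1_def using holomorphic_derivI[OF assms(4) oD that] .
  have hg2: "(g2 has_field_derivative dg2 z) (at z)" if "z \<in> D" for z
    unfolding dg2_def using holomorphic_derivI[OF assms(5) oD that] .
  have hs: "(s has_field_derivative ds z) (at z)" if "z \<in> D" for z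
    unfolding ds_def using holomorphic_derivI[OF assms(7) oD that] .
  define w1 where "w1 = (\<lambda>z. \<i>/2*(g1 z*g2 z+1))"
  define w2 where "w2 = (\<lambda>z. 1/2*(g1 z*g2 z-1))"
  define w3 where "w3 = (\<lambda>z. 1/2*(g1 z+g2 z))"
  define w4 where "w4 = (\<lambda>z. \<i>/2*(g1 z-g2 z))"
  define u1 where "u1 = (\<lambda>z. \<i>/2*(dg1 z*g2 z+g1 z*dg2 z))"
  define u2 where "u2 = (\<lambda>z. 1/2*(dg1 z*g2 z+g1 z*dg2 z))"
  define u3 where "u3 = (\<lambda>z. 1/2*(dg1 z+dg2 z))"
  define u4 where "u4 = (\<lambda>z. \<i>/2*(dg1 z-dg2 z))"
  have dw: "(w1 has_field_derivative u1 z) (at z)" "(w2 has_field_derivative u2 z) (at z)"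
     "(w3 has_field_derivative u3 z) (at z)" "(w4 has_field_derivative u4 z) (at z)" if "z \<in> D" for z
    unfolding w1_def w2_def w3_def w4_def u1_def u2_def u3_def u4_def
    using hg1[OF that] hg2[OF that]
    by (auto intro!: derivative_eq_intros simp: field_simps)
  define phi1 where "phi1 = (\<lambda>z. w1 z / s z)"
  define phi2 where "phi2 = (\<lambda>z. w2 z / s z)"
  define phi3 where "phi3 = (\<lambda>z. w3 z / s z)"
  define phi4 where "phi4 = (\<lambda>z. w4 z / s z)"
  define psi1 where "psi1 = (\<lambda>z. (u1 z * s z - w1 z * ds z)/(s z * s z))"
  define psi2 where "psi2 = (\<lambda>z. (u2 z * s z - w2 z * ds z)/(s z * s z))"
  define psi3 where "psi3 = (\<lambda>z. (u3 z * s z - w3 z * ds z)/(s z * s z))"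
  define psi4 where "psi4 = (\<lambda>z. (u4 z * s z - w4 z * ds z)/(s z * s z))"
  have dphi: "(phi1 has_field_derivative psi1 z) (at z)" "(phi2 has_field_derivative psi2 z) (at z)"
     "(phi3 has_field_derivative psi3 z) (at z)" "(phi4 has_field_derivative psi4 z) (at z)" if "z \<in> D" for z
    unfolding phi1_def phi2_def phi3_def phi4_def psi1_def psi2_def psi3_def psi4_def
    by (intro DERIV_divide dw[OF that] hs[OF that] sz[OF that])+
  have dphii: "((\<lambda>z. phi1 z * \<i>) has_field_derivative psi1 z * \<i>) (at z)"
     "((\<lambda>z. phi2 z * \<i>) has_field_derivative psi2 z * \<i>) (at z)"
     "((\<lambda>z. phi3 z * \<i>) has_field_derivative psi3 z * \<i>) (at z)"
     "((\<lambda>z. phi4 z * \<i>) has_field_derivative psi4 z * \<i>) (at z)" if "z \<in> D" for z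
    using dphi[OF that] by (auto intro: DERIV_cmult_right)
  have dPsi: "(\<Psi>1 has_field_derivative phi1 z) (at z)" "(\<Psi>2 has_field_derivative phi2 z) (at z)"
     "(\<Psi>3 has_field_derivative phi3 z) (at z)" "(\<Psi>4 has_field_derivative phi4 z) (at z)" if "z \<in> D" for z
    using holomorphic_derivI[OF assms(9) oD that] holomorphic_derivI[OF assms(10) oD that]
      holomorphic_derivI[OF assms(11) oD that] holomorphic_derivI[OF assms(12) oD that]
      assms(13-16)[OF that]
    unfolding phi1_def phi2_def phi3_def phi4_def w1_def w2_def w3_def w4_def by auto
  have xeq: "x = (\<lambda>z. vv (Re (\<Psi>1 z)) (Re (\<Psi>2 z)) (Re (\<Psi>3 z)) (Re (\<Psi>4 z)))"
    by (simp add: x_def vv_def)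
  have Dx: "(x has_derivative (\<lambda>h. vv (Re (phi1 q*h)) (Re (phi2 q*h)) (Re (phi3 q*h)) (Re (phi4 q*h)))) (at q)"
    if "q \<in> D" for q
    unfolding xeq by (intro vv_deriv dPsi[OF that])
  have PU: "pdu x q = vv (Re (phi1 q)) (Re (phi2 q)) (Re (phi3 q)) (Re (phi4 q))" if "q \<in> D" for q
    unfolding pdu_def frechet_derivative_at[OF Dx[OF that], symmetric] by simp
  have PV: "pdv x q = vv (Re (phi1 q * \<i>)) (Re (phi2 q * \<i>)) (Re (phi3 q * \<i>)) (Re (phi4 q * \<i>))" if "q \<in> D" for q
    unfolding pdv_def frechet_derivative_at[OF Dx[OF that], symmetric] by simp
  have DU: "(pdu x has_derivative (\<lambda>h. vv (Re (psi1 q*h)) (Re (psi2 q*h)) (Re (psi3 q*h)) (Re (psi4 q*h)))) (at q)"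
    if "q \<in> D" for q
    by (rule has_derivative_transform_within_open[OF vv_deriv[OF dphi[OF that]] oD that])
      (simp add: PU)
  have DV: "(pdv x has_derivative (\<lambda>h. vv (Re (psi1 q*\<i>*h)) (Re (psi2 q*\<i>*h)) (Re (psi3 q*\<i>*h)) (Re (psi4 q*\<i>*h)))) (at q)"
    if "q \<in> D" for q
    by (rule has_derivative_transform_within_open[OF vv_deriv[OF dphii[OF that]] oD that])
      (simp add: PV)
  have PUU: "pdu (pdu x) q = vv (Re (psi1 q*1)) (Re (psi2 q*1)) (Re (psi3 q*1)) (Re (psi4 q*1))"
   and PVU: "pdv (pdu x) q = vv (Re (psi1 q*\<i>)) (Re (psi2 q*\<i>)) (Re (psi3 q*\<i>)) (Re (psi4 q*\<i>))"
   and PUV: "pdu (pdv x) q = vv (Re (psi1 q*\<i>*1)) (Re (psi2 q*\<i>*1)) (Re (psi3 q*\<i>*1)) (Re (psi4 q*\<i>*1))"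
   and PVV: "pdv (pdv x) q = vv (Re (psi1 q*\<i>*\<i>)) (Re (psi2 q*\<i>*\<i>)) (Re (psi3 q*\<i>*\<i>)) (Re (psi4 q*\<i>*\<i>))"
    if "q \<in> D" for q
    unfolding pdu_def[of "pdu x"] pdv_def[of "pdu x"] pdu_def[of "pdv x"] pdv_def[of "pdv x"]
      frechet_derivative_at[OF DU[OF that], symmetric] frechet_derivative_at[OF DV[OF that], symmetric]
    by simp_all
  have pt: "fE x p = fG x p \<and> fF x p = 0 \<and> sigma11 x p \<bullet> sigma12 x p = 0 \<and>
     (fE x p)^2 * ((norm (sigma11 x p))^2 - (norm (sigma12 x p))^2) = 1 \<and>
     mean_curv_vec x p = 0 \<and> \<not> superconformal_point x p \<and>
     (\<forall>a b::real. a *\<^sub>R pdu x p + b *\<^sub>R pdv x p = 0 \<longrightarrow> a = 0 \<and> b = 0)" if "p \<in> D" for p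
  proof -
    have S: "s p \<noteq> 0" "(s p)^2 = dg1 p * dg2 p" using sz[OF that] assms(8)[OF that]
      unfolding dg1_def dg2_def by auto
    note pa = phi_alg(1)[OF S, where P="g1 p" and Q="g2 p"]
      phi_alg(2)[OF S, where P="g1 p" and Q="g2 p" and dS="ds p"]
      phi_alg(3)[OF S, where P="g1 p" and Q="g2 p" and dS="ds p"]
      phi_alg(4)[OF S, where P="g1 p" and Q="g2 p"]
    have h1: "(phi1 p)\<^sup>2 + (phi2 p)\<^sup>2 + (phi3 p)\<^sup>2 + (phi4 p)\<^sup>2 = 0"
      using pa(1) unfolding phi1_def phi2_def phi3_def phi4_def w1_def w2_def w3_def w4_def by simp
    have h2: "phi1 p * psi1 p + phi2 p * psi2 p + phi3 p * psi3 p + phi4 p * psi4 p = 0"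
      using pa(2) unfolding phi1_def phi2_def phi3_def phi4_def w1_def w2_def w3_def w4_def
        psi1_def psi2_def psi3_def psi4_def u1_def u2_def u3_def u4_def by simp
    have h3: "(psi1 p)\<^sup>2 + (psi2 p)\<^sup>2 + (psi3 p)\<^sup>2 + (psi4 p)\<^sup>2 = 1"
      using pa(3) unfolding w1_def w2_def w3_def w4_def
        psi1_def psi2_def psi3_def psi4_def u1_def u2_def u3_def u4_def by simp
    have h4: "\<not> (phi1 p = 0 \<and> phi2 p = 0 \<and> phi3 p = 0 \<and> phi4 p = 0)"
      using pa(4) unfolding phi1_def phi2_def phi3_def phi4_def w1_def w2_def w3_def w4_def by simp
    show ?thesis by (rule main_alg[OF PU[OF that] PV[OF that] PUU[OF that] PVU[OF that] PVV[OF that] h1 h2 h3 h4])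
  qed
  have cdg: "continuous_on D dg1" "continuous_on D dg2" "continuous_on D ds"
    unfolding dg1_def dg2_def ds_def
    by (intro holomorphic_on_imp_continuous_on holomorphic_deriv assms oD)+
  have cg: "continuous_on D g1" "continuous_on D g2" "continuous_on D s"
    by (intro holomorphic_on_imp_continuous_on assms)+
  have cpsi: "continuous_on D psi1" "continuous_on D psi2" "continuous_on D psi3" "continuous_on D psi4"
    unfolding psi1_def psi2_def psi3_def psi4_def u1_def u2_def u3_def u4_def w1_def w2_def w3_def w4_def
    using sz by (intro continuous_intros cdg cg; simp)+
  have cpsii: "continuous_on D (\<lambda>z. psi1 z * \<i>)" "continuous_on D (\<lambda>z. psi2 z * \<i>)"
     "continuous_on D (\<lambda>z. psi3 z * \<i>)" "continuous_on D (\<lambda>z. psi4 z * \<i>)"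
    "continuous_on D (\<lambda>z. psi1 z * \<i> * \<i>)" "continuous_on D (\<lambda>z. psi2 z * \<i> * \<i>)"
     "continuous_on D (\<lambda>z. psi3 z * \<i> * \<i>)" "continuous_on D (\<lambda>z. psi4 z * \<i> * \<i>)"
    by (intro continuous_intros cpsi)+
  have c1: "continuous_on D (pdu (pdu x))"
    by (rule continuous_on_eq[OF vv_cont[OF cpsi]]) (simp add: PUU)
  have c2: "continuous_on D (pdv (pdu x))"
    by (rule continuous_on_eq[OF vv_cont[OF cpsii(1-4)]]) (simp add: PVU)
  have c3: "continuous_on D (pdu (pdv x))"
    by (rule continuous_on_eq[OF vv_cont[OF cpsii(1-4)]]) (simp add: PUV)
  have c4: "continuous_on D (pdv (pdv x))"
    by (rule continuous_on_eq[OF vv_cont[OF cpsii(5-8)]]) (simp add: PVV)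
  have reg: "regular_surface D x"
  proof -
    have "\<forall>p\<in>D. x differentiable at p \<and> pdu x differentiable at p \<and> pdv x differentiable at p"
      using Dx DU DV differentiableI by blast
    moreover have "\<forall>p\<in>D. \<forall>a b::real. a *\<^sub>R pdu x p + b *\<^sub>R pdv x p = 0 \<longrightarrow> a = 0 \<and> b = 0"
      using pt by blast
    ultimately show ?thesis using oD assms(3) c1 c2 c3 c4 unfolding regular_surface_def by blast
  qed
  show ?thesis
    unfolding minimal_general_type_def minimal_surface_def canonical_first_type_def
    using reg pt by blast
qed
end
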